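(* Let $n\ge0$ be an integer and let $B^*$ be the unique positive zero of $B\mapsto(2n+1)-BF'_{2n+1}(B)/F_{2n+1}(B)$. Then $B^*\ge\sqrt{n}$.
   Context: For $q>0$, $F_q(y):=\int_0^\infty u^{q-1}e^{yu-u^2/2}\,\mathrm{d}u$ for $y\in\mathbb{R}$. It is known that the function $B\mapsto(2n+1)-BF'_{2n+1}(B)/F_{2n+1}(B)$ is strictly decreasing with a unique zero $B^*>0$. Moreover, $\frac{\partial}{\partial B}\frac{B^{2n+1}}{F_{2n+1}(B)}>0$ if and only if $B<B^*$. *)

theory Defs
  imports "HOL-Analysis.Analysis"
begin

definition F :: "real \<Rightarrow> real \<Rightarrow> real" where
  "F q y = integral {0..} (\<lambda>u. u powr (q - 1) * exp (y * u - u\<^sup>2 / 2))"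

end

theory Submission
  imports Defs
begin

lemma pow_le_fact_exp:
  fixes u :: real assumes "u \<ge> 0"
  shows "u ^ k \<le> fact k * exp u"
proof -
  obtain t where t: "exp u = (\<Sum>m<Suc k. u ^ m / fact m) + exp t / fact (Suc k) * u ^ Suc k"
    using Maclaurin_exp_le[of u "Suc k"] by blast
  have "u ^ k / fact k \<le> (\<Sum>m<Suc k. u ^ m / fact m)"
    by (rule member_le_sum[where f="\<lambda>m. u ^ m / fact m", of k "{..<Suc k}"]) (use assms in auto)
  also have "\<dots> \<le> exp u" unfolding t using assms by (intro add_increasing2) auto
  finally show ?thesis by (simp add: field_simps)
qed

lemma g_bound:
  fixes u c :: real assumes "u \<ge> 0"
  shows "u ^ k * exp (c*u - u\<^sup>2/2) \<le> fact k * exp ((c+2)\<^sup>2/2) * exp (-u)"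
proof -
  have "u ^ k * exp (c*u - u\<^sup>2/2) \<le> fact k * exp u * exp (c*u - u\<^sup>2/2)"
    by (intro mult_right_mono pow_le_fact_exp assms) auto
  also have "\<dots> = fact k * exp ((c+1)*u - u\<^sup>2/2)"
    by (simp add: mult_exp_exp algebra_simps)
  also have "\<dots> \<le> fact k * exp ((c+2)\<^sup>2/2 - u)"
  proof -
    have "(c+1)*u - u\<^sup>2/2 \<le> (c+2)\<^sup>2/2 - u"
      using sum_power2_ge_zero[of "u - (c+2)" 0] by (simp add: power2_eq_square algebra_simps)
    thus ?thesis by simp
  qed
  also have "\<dots> = fact k * exp ((c+2)\<^sup>2/2) * exp (-u)"
    by (simp only: diff_conv_add_uminus exp_add mult.assoc)
  finally show ?thesis .
qed

lemma dom_integrable: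
  fixes h :: "real \<Rightarrow> real"
  assumes "continuous_on {a..} h" "\<And>u. u \<ge> a \<Longrightarrow> \<bar>h u\<bar> \<le> C * exp (-u)"
  shows "h integrable_on {a..}"
proof (rule measurable_bounded_by_integrable_imp_integrable)
  show "h \<in> borel_measurable (lebesgue_on {a..})"
    by (rule continuous_imp_measurable_on_sets_lebesgue[OF assms(1)]) auto
  show "(\<lambda>u. C * exp (-u)) integrable_on {a..}"
    using integrable_on_cmult_left[OF integrable_on_exp_minus_to_infinity[of 1 a], of C] by simp
qed (use assms in auto)

lemma dom_tendsto:
  fixes h :: "real \<Rightarrow> real"
  assumes "continuous_on {0..} h" "\<And>u. u \<ge> 0 \<Longrightarrow> \<bar>h u\<bar> \<le> C * exp (-u)"
  shows "((\<lambda>b. integral {0..b} h) \<longlongrightarrow> integral {0..} h) at_top"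
proof -
  have ev: "\<forall>\<^sub>F b in at_top. \<bar>integral {0..b} h - integral {0..} h\<bar> \<le> C * exp (-b)"
  proof (rule eventually_at_top_linorderI[of 0])
    fix b :: real assume b: "b \<ge> 0"
    have i1: "h integrable_on {0..b}"
      by (rule integrable_continuous_interval, rule continuous_on_subset[OF assms(1)]) auto
    have i2: "h integrable_on {b..}"
      by (rule dom_integrable[of b h C]) (use assms b in \<open>auto intro: continuous_on_subset\<close>)
    have U: "{0..} = {0..b} \<union> {b..}" using b by auto
    have "integral {0..} h = integral {0..b} h + integral {b..} h"
      unfolding U by (rule integral_Un[OF i1 i2]) (use b in auto)
    hence "\<bar>integral {0..b} h - integral {0..} h\<bar> = norm (integral {b..} h)" by simp
    also have "\<dots> \<le> integral {b..} (\<lambda>u. C * exp (-u))"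
      by (rule integral_norm_bound_integral[OF i2])
         (use integrable_on_cmult_left[OF integrable_on_exp_minus_to_infinity[of 1 b], of C] assms b in auto)
    also have "\<dots> = C * exp (-b)"
      using has_integral_exp_minus_to_infinity[of 1 b] by (simp add: integral_unique)
    finally show "\<bar>integral {0..b} h - integral {0..} h\<bar> \<le> C * exp (-b)" .
  qed
  have "((\<lambda>b. C * exp (-b)) \<longlongrightarrow> 0) at_top" by real_asymp
  hence "((\<lambda>b. integral {0..b} h - integral {0..} h) \<longlongrightarrow> 0) at_top"
    by (rule Lim_null_comparison[rotated]) (use ev in simp)
  thus ?thesis by (simp add: LIM_zero_iff)
qed

definition gg :: "nat \<Rightarrow> real \<Rightarrow> real \<Rightarrow> real" where
  "gg k c u = u ^ k * exp (c*u - u\<^sup>2/2)"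

definition II :: "nat \<Rightarrow> real \<Rightarrow> real" where
  "II k c = integral {0..} (gg k c)"

lemma gg_cont: "continuous_on S (gg k c)"
  unfolding gg_def by (intro continuous_intros) auto

lemma gg_nonneg: "u \<ge> 0 \<Longrightarrow> gg k c u \<ge> 0"
  unfolding gg_def by simp

lemma gg_bound: "u \<ge> 0 \<Longrightarrow> \<bar>gg k c u\<bar> \<le> fact k * exp ((c+2)\<^sup>2/2) * exp (-u)"
  using g_bound[of u k c] gg_nonneg[of u k c] unfolding gg_def by simp

lemma gg_int: "gg k c integrable_on {0..}"
  by (rule dom_integrable[OF gg_cont gg_bound]) simp

lemma gg_int_c: "(\<lambda>u. c * gg k y u) integrable_on {0..}"
  using integrable_on_cmult_left[OF gg_int, of c k y] by simp

lemma II_nonneg: "II k c \<ge> 0"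
  unfolding II_def by (rule integral_nonneg[OF gg_int]) (auto intro: gg_nonneg)

lemma exp_taylor2: "\<bar>exp (x::real) - 1 - x\<bar> \<le> x\<^sup>2 * exp \<bar>x\<bar>"
proof -
  obtain t where t: "\<bar>t\<bar> \<le> \<bar>x\<bar>" "exp x = (\<Sum>m<2. x ^ m / fact m) + exp t / fact 2 * x ^ 2"
    using Maclaurin_exp_le[of x 2] by blast
  have "exp x - 1 - x = exp t / 2 * x\<^sup>2" using t(2) by (simp add: numeral_2_eq_2)
  moreover have "exp t / 2 * x\<^sup>2 \<ge> 0" by simp
  ultimately have "\<bar>exp x - 1 - x\<bar> = exp t / 2 * x\<^sup>2" by linarith
  also have "\<dots> \<le> exp \<bar>x\<bar> * x\<^sup>2"
  proof -
    have "t \<le> \<bar>x\<bar>" using t(1) by linarith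
    hence "exp t \<le> exp \<bar>x\<bar>" by simp
    moreover have "exp t / 2 \<le> exp t" using exp_gt_zero[of t] by linarith
    ultimately have "exp t / 2 \<le> exp \<bar>x\<bar>" by linarith
    thus ?thesis by (rule mult_right_mono) simp
  qed
  finally show ?thesis by (simp add: mult.commute)
qed

lemma deriv_from_bound:
  fixes f :: "real \<Rightarrow> real"
  assumes "\<And>h. h \<noteq> 0 \<Longrightarrow> \<bar>h\<bar> < 1 \<Longrightarrow> \<bar>f (y+h) - f y - h*D\<bar> \<le> h\<^sup>2 * K"
  shows "(f has_real_derivative D) (at y)"
proof -
  have "((\<lambda>h. (f (y+h) - f y) / h - D) \<longlongrightarrow> 0) (at 0)"
  proof (rule Lim_null_comparison)
    have ev: "\<forall>\<^sub>F h in at (0::real). h \<noteq> 0 \<and> \<bar>h\<bar> < 1"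
      unfolding eventually_at by (rule exI[of _ 1]) (auto simp: dist_real_def)
    show "\<forall>\<^sub>F h in at 0. norm ((f (y+h) - f y) / h - D) \<le> \<bar>h\<bar> * K"
      using ev
    proof (rule eventually_mono)
      fix h :: real assume h: "h \<noteq> 0 \<and> \<bar>h\<bar> < 1"
      have "(f (y+h) - f y) / h - D = (f (y+h) - f y - h*D) / h"
        using h by (simp add: diff_divide_distrib)
      hence "norm ((f (y+h) - f y) / h - D) = \<bar>f (y+h) - f y - h*D\<bar> / \<bar>h\<bar>"
        by (simp add: abs_divide)
      also have "\<dots> \<le> h\<^sup>2 * K / \<bar>h\<bar>"
        using assms[of h] h by (simp add: divide_right_mono)
      also have "h\<^sup>2 * K / \<bar>h\<bar> = \<bar>h\<bar> * K"
      proof -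
        show ?thesis using h by (cases "h > 0") (auto simp: power2_eq_square)
      qed
      finally show "norm ((f (y+h) - f y) / h - D) \<le> \<bar>h\<bar> * K" .
    qed
    show "((\<lambda>h. \<bar>h\<bar> * K) \<longlongrightarrow> 0) (at 0)"
      by (auto intro!: tendsto_eq_intros)
  qed
  hence "((\<lambda>h. (f (y+h) - f y) / h) \<longlongrightarrow> D) (at 0)"
    by (simp add: LIM_zero_iff)
  thus ?thesis by (simp add: DERIV_def)
qed

lemma II_deriv: "(II k has_real_derivative II (Suc k) y) (at y)"
proof -
  define K where "K = II (k+2) (y+1)"
  have key: "\<bar>II k (y+h) - II k y - h * II (Suc k) y\<bar> \<le> h\<^sup>2 * K" if h: "\<bar>h\<bar> \<le> 1" for h
  proof -
    have "II k (y+h) - II k y - h * II (Suc k) y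
        = integral {0..} (\<lambda>u. gg k (y+h) u - gg k y u - h * gg (Suc k) y u)"
    proof -
      have a: "integral {0..} (\<lambda>u. gg k (y+h) u - gg k y u) = II k (y+h) - II k y"
        unfolding II_def by (rule integral_diff[OF gg_int gg_int])
      have b: "integral {0..} (\<lambda>u. h * gg (Suc k) y u) = h * II (Suc k) y"
        unfolding II_def by (rule integral_mult_right)
      have "integral {0..} (\<lambda>u. gg k (y+h) u - gg k y u - h * gg (Suc k) y u)
          = integral {0..} (\<lambda>u. gg k (y+h) u - gg k y u) - integral {0..} (\<lambda>u. h * gg (Suc k) y u)"
        by (rule integral_diff) (intro integrable_diff gg_int_c gg_int)+
      thus ?thesis by (simp only: a b)
    qed
    also have "\<bar>\<dots>\<bar> \<le> integral {0..} (\<lambda>u. h\<^sup>2 * gg (k+2) (y+1) u)"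
    proof (subst real_norm_def[symmetric], rule integral_norm_bound_integral)
      show "(\<lambda>u. gg k (y+h) u - gg k y u - h * gg (Suc k) y u) integrable_on {0..}"
        by (intro integrable_diff gg_int_c gg_int)
      show "(\<lambda>u. h\<^sup>2 * gg (k+2) (y+1) u) integrable_on {0..}"
        by (rule gg_int_c)
    next
      fix u :: real assume "u \<in> {0..}"
      hence u: "u \<ge> 0" by simp
      have eq: "gg k (y+h) u - gg k y u - h * gg (Suc k) y u
           = gg k y u * (exp (h*u) - 1 - h*u)"
      proof -
        have "(y+h)*u - u\<^sup>2/2 = (y*u - u\<^sup>2/2) + h*u" by (simp add: algebra_simps)
        hence e1: "exp ((y+h)*u - u\<^sup>2/2) = exp (y*u - u\<^sup>2/2) * exp (h*u)"
          by (simp only: exp_add)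
        show ?thesis unfolding gg_def e1 power_Suc by (simp add: algebra_simps)
      qed
      have "\<bar>exp (h*u) - 1 - h*u\<bar> \<le> (h*u)\<^sup>2 * exp u"
      proof -
        have "\<bar>h*u\<bar> \<le> u" using h u by (simp add: abs_mult mult_left_le_one_le)
        hence "exp \<bar>h*u\<bar> \<le> exp u" by simp
        hence "(h*u)\<^sup>2 * exp \<bar>h*u\<bar> \<le> (h*u)\<^sup>2 * exp u" by (rule mult_left_mono) simp
        with exp_taylor2[of "h*u"] show ?thesis by linarith
      qed
      hence "\<bar>gg k y u * (exp (h*u) - 1 - h*u)\<bar> \<le> gg k y u * ((h*u)\<^sup>2 * exp u)"
        using gg_nonneg[OF u, of k y] by (simp add: abs_mult mult_left_mono)
      also have "\<dots> = h\<^sup>2 * gg (k+2) (y+1) u"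
      proof -
        have "(y+1)*u - u\<^sup>2/2 = (y*u - u\<^sup>2/2) + u" by (simp add: algebra_simps)
        hence e2: "exp ((y+1)*u - u\<^sup>2/2) = exp (y*u - u\<^sup>2/2) * exp u"
          by (simp only: exp_add)
        have p: "u ^ (k+2) = u^k * u\<^sup>2" by (rule power_add)
        show ?thesis unfolding gg_def e2 p power_mult_distrib by (simp only: mult_ac power2_eq_square)
      qed
      finally show "norm (gg k (y+h) u - gg k y u - h * gg (Suc k) y u) \<le> h\<^sup>2 * gg (k+2) (y+1) u"
        using eq by simp
    qed
    also have "\<dots> = h\<^sup>2 * K" unfolding K_def II_def by simp
    finally show ?thesis .
  qed
  show ?thesis by (rule deriv_from_bound[of _ _ _ K]) (use key in auto)
qed

lemma gg_deriv:
  "(gg (Suc m) y has_real_derivative ((real m + 1) * gg m y u + (y - u) * gg (Suc m) y u)) (at u)"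
proof -
  have d1: "((\<lambda>u. u ^ Suc m) has_real_derivative (real (Suc m) * u ^ m)) (at u)"
    using DERIV_pow[of "Suc m" u] by simp
  have d2: "((\<lambda>u. exp (y*u - u\<^sup>2/2)) has_real_derivative (exp (y*u - u\<^sup>2/2) * (y - u))) (at u)"
    by (auto intro!: derivative_eq_intros simp: power2_eq_square)
  have "(gg (Suc m) y has_real_derivative
      (real (Suc m) * u ^ m * exp (y*u - u\<^sup>2/2) + (exp (y*u - u\<^sup>2/2) * (y - u)) * u ^ Suc m)) (at u)"
    unfolding gg_def by (rule DERIV_mult[OF d1 d2])
  moreover have "real (Suc m) * u ^ m * exp (y*u - u\<^sup>2/2) + (exp (y*u - u\<^sup>2/2) * (y - u)) * u ^ Suc m
      = (real m + 1) * gg m y u + (y - u) * gg (Suc m) y u"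
  proof -
    have r: "(1+k)*a*E + (E*(y-u))*b = (k+1)*(a*E) + (y-u)*(b*E)" for k a b E :: real
      by (simp add: algebra_simps)
    show ?thesis unfolding gg_def of_nat_Suc by (rule r)
  qed
  ultimately show ?thesis by (rule DERIV_cong)
qed

lemma II_ibp: "II (m+2) y = y * II (Suc m) y + (real m + 1) * II m y"
proof -
  define hf where "hf u = gg (m+2) y u - y * gg (Suc m) y u - (real m + 1) * gg m y u" for u
  define A where "A k = fact k * exp ((y+2)\<^sup>2/2)" for k :: nat
  have hf_cont: "continuous_on {0..} hf"
    unfolding hf_def by (intro continuous_intros gg_cont)
  have hf_bound: "\<bar>hf u\<bar> \<le> (A (m+2) + \<bar>y\<bar> * A (Suc m) + (real m + 1) * A m) * exp (-u)" if u: "u \<ge> 0" for u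
  proof -
    have "\<bar>hf u\<bar> \<le> \<bar>gg (m+2) y u\<bar> + \<bar>y\<bar> * \<bar>gg (Suc m) y u\<bar> + (real m + 1) * \<bar>gg m y u\<bar>"
    proof -
      have e1: "\<bar>y * gg (Suc m) y u\<bar> = \<bar>y\<bar> * \<bar>gg (Suc m) y u\<bar>" by (rule abs_mult)
      have e2: "\<bar>(real m + 1) * gg m y u\<bar> = (real m + 1) * \<bar>gg m y u\<bar>" by (simp add: abs_mult)
      have tri: "\<bar>a - b - c\<bar> \<le> \<bar>a\<bar> + \<bar>b\<bar> + \<bar>c\<bar>" for a b c :: real by arith
      show ?thesis unfolding hf_def e1[symmetric] e2[symmetric] by (rule tri)
    qed
    also have "\<dots> \<le> A (m+2) * exp (-u) + \<bar>y\<bar> * (A (Suc m) * exp (-u)) + (real m + 1) * (A m * exp (-u))"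
    proof -
      have b: "\<bar>gg k y u\<bar> \<le> A k * exp (-u)" for k
        unfolding A_def by (rule gg_bound[OF u])
      show ?thesis by (intro add_mono mult_left_mono b) auto
    qed
    finally show ?thesis by (simp add: algebra_simps)
  qed
  have lim1: "((\<lambda>b. integral {0..b} hf) \<longlongrightarrow> integral {0..} hf) at_top"
    by (rule dom_tendsto[OF hf_cont hf_bound])
  have int_eq: "integral {0..b} hf = - gg (Suc m) y b" if b: "b \<ge> 0" for b
  proof -
    have "(hf has_integral (- gg (Suc m) y b - - gg (Suc m) y 0)) {0..b}"
    proof (rule fundamental_theorem_of_calculus[OF b, where f="\<lambda>u. - gg (Suc m) y u"])
      fix u assume "u \<in> {0..b}"
      have "((\<lambda>u. - gg (Suc m) y u) has_real_derivative - ((real m + 1) * gg m y u + (y - u) * gg (Suc m) y u)) (at u)"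
        by (intro DERIV_minus gg_deriv)
      moreover have "- ((real m + 1) * gg m y u + (y - u) * gg (Suc m) y u) = hf u"
      proof -
        have g2: "gg (m+2) y u = u * gg (Suc m) y u" unfolding gg_def by simp
        have r: "- ((k + 1) * c + (y - u) * b) = u * b - y * b - (k + 1) * c" for k c b :: real
          by (simp add: algebra_simps)
        show ?thesis unfolding hf_def g2 by (rule r)
      qed
      ultimately show "((\<lambda>u. - gg (Suc m) y u) has_vector_derivative hf u) (at u within {0..b})"
        by (simp add: has_real_derivative_iff_has_vector_derivative has_vector_derivative_at_within)
    qed
    thus ?thesis by (simp add: integral_unique gg_def)
  qed
  have lim2: "((\<lambda>b. - gg (Suc m) y b) \<longlongrightarrow> 0) at_top"
  proof -
    have "((\<lambda>b. A (Suc m) * exp (-b)) \<longlongrightarrow> 0) at_top" by real_asymp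
    moreover have "\<forall>\<^sub>F b in at_top. norm (- gg (Suc m) y b) \<le> A (Suc m) * exp (-b)"
    proof (rule eventually_at_top_linorderI[of 0])
      fix b :: real assume "b \<ge> 0"
      thus "norm (- gg (Suc m) y b) \<le> A (Suc m) * exp (-b)"
        using gg_bound[of b "Suc m" y] unfolding A_def by (simp only: norm_minus_cancel real_norm_def abs_minus_cancel)
    qed
    ultimately show ?thesis by (rule Lim_null_comparison[rotated])
  qed
  have "((\<lambda>b. integral {0..b} hf) \<longlongrightarrow> 0) at_top"
  proof -
    have ev: "\<forall>\<^sub>F b in at_top. - gg (Suc m) y b = integral {0..b} hf"
      by (rule eventually_at_top_linorderI[of 0]) (simp add: int_eq)
    show ?thesis by (rule Lim_transform_eventually[OF lim2 ev])
  qed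
  hence "0 = integral {0..} hf" by (rule tendsto_unique[OF _ _ lim1, rotated]) simp
  hence "integral {0..} hf = 0" by simp
  moreover have "integral {0..} hf = II (m+2) y - y * II (Suc m) y - (real m + 1) * II m y"
  proof -
    have "integral {0..} hf = integral {0..} (\<lambda>u. gg (m+2) y u - y * gg (Suc m) y u) - integral {0..} (\<lambda>u. (real m + 1) * gg m y u)"
      unfolding hf_def by (rule integral_diff) (intro integrable_diff gg_int_c gg_int)+
    also have "integral {0..} (\<lambda>u. gg (m+2) y u - y * gg (Suc m) y u) = II (m+2) y - y * II (Suc m) y"
      unfolding II_def by (subst integral_diff) (auto intro: gg_int gg_int_c simp: integral_mult_right)
    also have "integral {0..} (\<lambda>u. (real m + 1) * gg m y u) = (real m + 1) * II m y"
      unfolding II_def by (rule integral_mult_right)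
    finally show ?thesis .
  qed
  ultimately show ?thesis by simp
qed

lemma II_lin: "integral {0..} (\<lambda>u. gg k y u - c * gg l y u) = II k y - c * II l y"
proof -
  have "integral {0..} (\<lambda>u. gg k y u - c * gg l y u) = integral {0..} (gg k y) - integral {0..} (\<lambda>u. c * gg l y u)"
    by (rule integral_diff[OF gg_int gg_int_c])
  also have "integral {0..} (\<lambda>u. c * gg l y u) = c * II l y"
    unfolding II_def by (rule integral_mult_right)
  finally show ?thesis unfolding II_def .
qed

lemma II_quad: "II (m+2) y - 2*t*II (Suc m) y + t\<^sup>2 * II m y \<ge> 0"
proof -
  let ?f = "\<lambda>u. gg (m+2) y u - (2*t) * gg (Suc m) y u + t\<^sup>2 * gg m y u"
  have i1: "(\<lambda>u. gg (m+2) y u - (2*t) * gg (Suc m) y u) integrable_on {0..}"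
    by (rule integrable_diff[OF gg_int gg_int_c])
  have "integral {0..} ?f
       = integral {0..} (\<lambda>u. gg (m+2) y u - (2*t) * gg (Suc m) y u) + integral {0..} (\<lambda>u. t\<^sup>2 * gg m y u)"
    by (rule integral_add[OF i1 gg_int_c])
  also have "\<dots> = (II (m+2) y - 2*t * II (Suc m) y) + t\<^sup>2 * II m y"
    unfolding II_lin unfolding II_def by (simp only: integral_mult_right)
  finally have eq: "integral {0..} ?f = II (m+2) y - 2*t * II (Suc m) y + t\<^sup>2 * II m y" .
  have "integral {0..} ?f \<ge> 0"
  proof (rule integral_nonneg)
    show "?f integrable_on {0..}"
      by (rule integrable_add[OF i1 gg_int_c])
    fix u :: real assume "u \<in> {0..}"
    hence u: "u \<ge> 0" by simp
    have "?f u = gg m y u * (u - t)\<^sup>2"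
    proof -
      have p1: "u^(m+2) = u^m * u * u" by (simp add: power_add power2_eq_square)
      have p2: "u^(Suc m) = u^m * u" by simp
      have r: "a*u*u*E - 2*t*(a*u*E) + t*t*(a*E) = a*E*((u-t)*(u-t))" for a E :: real
        by (simp add: algebra_simps)
      show ?thesis unfolding gg_def p1 p2 by (simp only: power2_eq_square r)
    qed
    moreover have "gg m y u * (u - t)\<^sup>2 \<ge> 0"
      using gg_nonneg[OF u, of m y] by (rule mult_nonneg_nonneg) simp
    ultimately show "?f u \<ge> 0" by (simp only:)
  qed
  thus ?thesis using eq by simp
qed

lemma F_eq_II: "F (real (2*n+1)) = II (2*n)"
proof
  fix y
  show "F (real (2*n+1)) y = II (2*n) y"
    unfolding F_def II_def
  proof (rule integral_spike[of "{0}"])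
    show "negligible {0::real}" by simp
    fix u :: real assume "u \<in> {0..} - {0}"
    hence u: "u > 0" by auto
    have e: "real (2*n+1) - 1 = real (2*n)" by simp
    have p: "u powr real (2*n) = u ^ (2*n)" using u by (rule powr_realpow)
    show "gg (2*n) y u = u powr (real (2*n+1) - 1) * exp (y * u - u\<^sup>2/2)"
      unfolding gg_def e p ..
  qed
qed

theorem lemma2p1:
  fixes n :: nat and Bstar :: real
  assumes "Bstar > 0"
    and "real (2*n+1) - Bstar * deriv (F (real (2*n+1))) Bstar / F (real (2*n+1)) Bstar = 0"
  shows "Bstar \<ge> sqrt (real n)"
proof -
  define q where "q = real (2*n+1)"
  define B where "B = Bstar"
  define a where "a = II (2*n) B"
  define b where "b = II (Suc (2*n)) B"
  define c where "c = II (2*n+2) B"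
  have Bpos: "B > 0" using assms(1) B_def by simp
  have qpos: "q > 0" unfolding q_def by simp
  have d: "deriv (II (2*n)) Bstar = b"
    unfolding b_def B_def by (rule DERIV_imp_deriv[OF II_deriv])
  have h: "q - B * b / a = 0" using assms(2) unfolding d F_eq_II q_def B_def a_def .
  have a0: "a \<ge> 0" unfolding a_def by (rule II_nonneg)
  have "a \<noteq> 0" using h qpos by auto
  hence apos: "a > 0" using a0 by simp
  have hb: "B * b = q * a" using h apos by (simp add: field_simps)
  have hc: "c = B * b + q * a" unfolding c_def b_def a_def q_def
    using II_ibp[of "2*n" B] by simp
  have quad: "c - 2*(q/B)*b + (q/B)\<^sup>2 * a \<ge> 0"
    unfolding c_def b_def a_def using II_quad[of "2*n" B "q/B"] by simp
  have "c - 2*(q/B)*b + (q/B)\<^sup>2 * a = 2*q*a - q\<^sup>2 * a / B\<^sup>2"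
  proof -
    have "2*(q/B)*b = 2*q*(B*b)/B\<^sup>2" using Bpos by (simp add: power2_eq_square field_simps)
    also have "\<dots> = 2*q*(q*a)/B\<^sup>2" using hb by simp
    finally show ?thesis using hc hb by (simp add: power2_eq_square field_simps)
  qed
  with quad have "q\<^sup>2 * a / B\<^sup>2 \<le> 2*q*a" by simp
  hence "q\<^sup>2 * a \<le> 2*q*a*B\<^sup>2" using Bpos by (simp add: field_simps)
  hence "q * (q * a) \<le> q * (2*a*B\<^sup>2)" by (simp add: power2_eq_square algebra_simps)
  hence "q * a \<le> 2*a*B\<^sup>2" using qpos by simp
  hence "a * q \<le> a * (2*B\<^sup>2)" by (simp add: algebra_simps)
  hence "q \<le> 2*B\<^sup>2" using apos by simp
  hence "real n \<le> B\<^sup>2" unfolding q_def by simp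
  hence "sqrt (real n) \<le> sqrt (B\<^sup>2)" by (rule real_sqrt_le_mono)
  thus ?thesis using Bpos B_def by simp
qed

end
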